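(* Let $N\ge2$, $s\in(0,1)$, $u\in H^s(\mathbb{R}^N)$ and $a\in\mathbb{R}$. Let $P_a u$ be the polarization of $u$ with respect to the hyperplane $\{x_1=a\}$. Then $$\langle u,u^+\rangle\ \ge\ \langle P_a u,(P_a u)^+\rangle \quad\text{and}\quad -\langle u,u^-\rangle\ \ge\ -\langle P_a u,(P_a u)^-\rangle .$$
   Context: $H^s(\mathbb{R}^N)=\{u\in L^2(\mathbb{R}^N): \iint\frac{|u(x)-u(y)|^2}{|x-y|^{N+2s}}dx\,dy<\infty\}$, and for $u,v\in H^s(\mathbb{R}^N)$, $\langle u,v\rangle=\frac{c_{N,s}}{2}\iint_{\mathbb{R}^N\times\mathbb{R}^N}\frac{(u(x)-u(y))(v(x)-v(y))}{|x-y|^{N+2s}}dx\,dy$ with $c_{N,s}=\frac{s2^{2s}\Gamma(\frac{N+2s}{2})}{\pi^{N/2}\Gamma(1-s)}$. Polarization: for $x=(x_1,\dots,x_N)$ let $\bar x=(2a-x_1,x_2,\dots,x_N)$, $\Sigma_a^-=\{x_1\le a\}$, $\Sigma_a^+=\{x_1\ge a\}$, and $(P_a u)(x)=\min\{u(x),u(\bar x)\}$ for $x\in\Sigma_a^+$, $(P_au)(x)=\max\{u(x),u(\bar x)\}$ for $x\in\Sigma_a^-$. Notation: $v^+=\max\{v,0\}$, $v^-=\max\{-v,0\}$. *)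

theory Defs
  imports "HOL-Analysis.Analysis"
begin

text \<open>Points of R^N are vectors of type real^'n, N = CARD('n).\<close>

definition in_Hs :: "real \<Rightarrow> (real^'n::finite \<Rightarrow> real) \<Rightarrow> bool" where
  "in_Hs s u \<longleftrightarrow>
     u \<in> borel_measurable lebesgue \<and>
     integrable lebesgue (\<lambda>x. (u x)\<^sup>2) \<and>
     integrable (lebesgue \<Otimes>\<^sub>M lebesgue)
       (\<lambda>(x,y). (u x - u y)\<^sup>2 / norm (x - y) powr (real CARD('n) + 2 * s))"

definition c_Ns :: "nat \<Rightarrow> real \<Rightarrow> real" where
  "c_Ns N s = s * 2 powr (2 * s) * Gamma ((real N + 2 * s) / 2)
              / (pi powr (real N / 2) * Gamma (1 - s))"

definition Hs_inner :: "real \<Rightarrow> (real^'n::finite \<Rightarrow> real) \<Rightarrow> (real^'n \<Rightarrow> real) \<Rightarrow> real" where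
  "Hs_inner s u v = c_Ns CARD('n) s / 2 *
     (\<integral>p. (case p of (x,y) \<Rightarrow>
        (u x - u y) * (v x - v y) / norm (x - y) powr (real CARD('n) + 2 * s))
      \<partial>(lebesgue \<Otimes>\<^sub>M lebesgue))"

definition reflect :: "'n::finite \<Rightarrow> real \<Rightarrow> real^'n \<Rightarrow> real^'n" where
  "reflect i a x = (\<chi> j. if j = i then 2 * a - x $ i else x $ j)"

definition polarization :: "'n::finite \<Rightarrow> real \<Rightarrow> (real^'n \<Rightarrow> real) \<Rightarrow> real^'n \<Rightarrow> real" where
  "polarization i a u x =
     (if x $ i \<ge> a then min (u x) (u (reflect i a x))
      else max (u x) (u (reflect i a x)))"

definition pos_part :: "('a \<Rightarrow> real) \<Rightarrow> 'a \<Rightarrow> real" where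
  "pos_part v x = max (v x) 0"

definition neg_part :: "('a \<Rightarrow> real) \<Rightarrow> 'a \<Rightarrow> real" where
  "neg_part v x = max (- v x) 0"

end

theory Submission
  imports Defs
begin

lemma sigma_finite_lebesgue: "sigma_finite_measure (lebesgue :: 'a::euclidean_space measure)"
proof -
  obtain A where A: "countable A" "A \<subseteq> sets (lborel :: 'a measure)" "\<Union>A = space (lborel :: 'a measure)" "\<forall>a\<in>A. emeasure (lborel :: 'a measure) a \<noteq> \<infinity>"
    using sigma_finite_lborel unfolding sigma_finite_measure_def by blast
  show ?thesis unfolding sigma_finite_measure_def
    apply (rule exI[of _ A])
    using A by (auto simp: emeasure_completion)
qed

lemma reflect_eq:
  fixes i :: "'n::finite"
  shows "reflect i a = (\<lambda>x. (2*a) *\<^sub>R axis i 1 + (\<Sum>j\<in>Basis. ((if j = axis i 1 then -1 else 1) * (x \<bullet> j)) *\<^sub>R j))"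
proof
  fix x :: "real^'n"
  have "(\<Sum>j\<in>Basis. ((if j = axis i 1 then -1 else 1) * (x \<bullet> j)) *\<^sub>R j)
      = (\<Sum>j\<in>Basis. (x \<bullet> j) *\<^sub>R j) - (\<Sum>j\<in>Basis. (if j = axis i 1 then 2 * (x \<bullet> j) else 0) *\<^sub>R j)"
    by (subst sum_subtractf[symmetric], rule sum.cong) (auto simp: scaleR_diff_left[symmetric])
  also have "\<dots> = x - (2 * (x $ i)) *\<^sub>R axis i 1"
  proof -
    have e: "axis i (1::real) \<in> Basis" by simp
    have "(\<Sum>j\<in>Basis. (if j = axis i 1 then 2 * (x \<bullet> j) else 0) *\<^sub>R j) = (\<Sum>j\<in>Basis. if j = axis i 1 then (2 * (x \<bullet> j)) *\<^sub>R j else 0)"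
      by (rule sum.cong) auto
    also have "\<dots> = (2 * (x $ i)) *\<^sub>R axis i 1"
      using e by (simp add: sum.delta' inner_axis)
    finally show ?thesis by (simp add: euclidean_representation)
  qed
  finally show "reflect i a x = (2*a) *\<^sub>R axis i 1 + (\<Sum>j\<in>Basis. ((if j = axis i 1 then -1 else 1) * (x \<bullet> j)) *\<^sub>R j)"
    by (simp add: reflect_def vec_eq_iff axis_def)
qed

lemma reflect_meas: "reflect i a \<in> lebesgue \<rightarrow>\<^sub>M lebesgue"
  unfolding reflect_eq by (rule lebesgue_affine_measurable[where c="\<lambda>j. if j = axis i 1 then -1 else 1" and t = "(2*a) *\<^sub>R axis i 1"]) auto

lemma reflect_distr: "distr lebesgue lebesgue (reflect i a) = lebesgue"
proof -
  note X = lebesgue_affine_euclidean[where c="\<lambda>j. if j = axis i (1::real) then -1 else 1" and t = "(2*a) *\<^sub>R axis i 1"]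
  have "(\<Prod>j\<in>(Basis::(real^'a) set). \<bar>(if j = axis i 1 then -1 else 1)::real\<bar>) = 1"
    by (rule prod.neutral) auto
  with X show ?thesis by (simp add: reflect_eq density_1)
qed

lemma reflect_invol[simp]: "reflect i a (reflect i a x) = x"
  by (simp add: reflect_def vec_eq_iff)

lemma reflect_comp[simp]: "reflect i a x $ i = 2*a - x $ i"
  by (simp add: reflect_def)

lemma reflect_fix: "x $ i = a \<Longrightarrow> reflect i a x = x"
  by (simp add: reflect_def vec_eq_iff)

lemma reflect_add: "reflect i a y = y + (2*a - 2 * y $ i) *\<^sub>R axis i 1"
  by (simp add: reflect_def vec_eq_iff axis_def)

lemma norm_reflect_both: "norm (reflect i a x - reflect i a y) = norm (x - y)"
proof -
  have "reflect i a x - reflect i a y = (x - y) + (2 * y $ i - 2 * x $ i) *\<^sub>R axis i 1"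
    by (simp add: reflect_add algebra_simps)
  also have "\<dots> = (\<chi> j. if j = i then - (x $ j - y $ j) else x $ j - y $ j)"
    by (simp add: vec_eq_iff axis_def)
  finally have e: "reflect i a x - reflect i a y = (\<chi> j. if j = i then - (x $ j - y $ j) else x $ j - y $ j)" .
  show ?thesis unfolding e norm_vec_def
    by (rule arg_cong[where f="\<lambda>f. L2_set f UNIV"]) (auto simp: fun_eq_iff)
qed

lemma norm_reflect_one: "norm (reflect i a x - y) = norm (x - reflect i a y)"
proof -
  have "norm (reflect i a x - y) = norm (reflect i a (reflect i a x) - reflect i a y)"
    by (rule norm_reflect_both[symmetric])
  then show ?thesis by simp
qed

lemma norm_sq_diff: "(norm (x - reflect i a y))\<^sup>2 = (norm (x - y))\<^sup>2 + 4 * ((x $ i - a) * (y $ i - a))"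
proof -
  have eq: "x - reflect i a y = (x - y) + (2 * (y $ i - a)) *\<^sub>R axis i 1"
    by (simp add: reflect_add algebra_simps)
  have "(norm (x - reflect i a y))\<^sup>2 = ((x - y) + (2 * (y $ i - a)) *\<^sub>R axis i 1) \<bullet> ((x - y) + (2 * (y $ i - a)) *\<^sub>R axis i 1)"
    by (simp only: eq power2_norm_eq_inner)
  also have "\<dots> = (x - y) \<bullet> (x - y) + 4 * (y $ i - a) * ((x - y) \<bullet> axis i 1) + 4 * (y $ i - a)^2"
    by (simp add: inner_add_left inner_add_right inner_commute power2_eq_square algebra_simps inner_axis_axis)
  also have "\<dots> = (norm (x - y))\<^sup>2 + 4 * ((x $ i - a) * (y $ i - a))"
    by (simp add: dot_square_norm inner_axis inner_diff_left power2_eq_square algebra_simps)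
  finally show ?thesis .
qed

lemma dist_same: "0 \<le> (x $ i - a) * (y $ i - a) \<Longrightarrow> norm (x - y) \<le> norm (x - reflect i a y)"
  by (rule power2_le_imp_le) (simp_all add: norm_sq_diff)

lemma dist_opp: "(x $ i - a) * (y $ i - a) \<le> 0 \<Longrightarrow> norm (x - reflect i a y) \<le> norm (x - y)"
  by (rule power2_le_imp_le) (simp_all add: norm_sq_diff)

definition SM :: "(real \<Rightarrow> real \<Rightarrow> real) \<Rightarrow> bool" where
  "SM \<Phi> \<longleftrightarrow> (\<forall>p1 p2 q1 q2. p1 \<le> p2 \<longrightarrow> q1 \<le> q2 \<longrightarrow> \<Phi> p1 q1 + \<Phi> p2 q2 \<le> \<Phi> p1 q2 + \<Phi> p2 q1)"

lemma four:
  assumes sm: "SM \<Phi>" and k: "kB \<le> kA \<or> (p1 = q1 \<and> p2 = q2)"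
  shows "(\<Phi> (min p1 p2) (min q1 q2) + \<Phi> (max p1 p2) (max q1 q2)) * kA
       + (\<Phi> (max p1 p2) (min q1 q2) + \<Phi> (min p1 p2) (max q1 q2)) * kB
       \<le> (\<Phi> p1 q1 + \<Phi> p2 q2) * kA + (\<Phi> p2 q1 + \<Phi> p1 q2) * kB"
proof (cases "p1 \<le> p2")
  case True
  show ?thesis
  proof (cases "q1 \<le> q2")
    case True with \<open>p1 \<le> p2\<close> show ?thesis by simp
  next
    case False
    then have kk: "kB \<le> kA" using k \<open>p1 \<le> p2\<close> by auto
    have "\<Phi> p1 q2 + \<Phi> p2 q1 \<le> \<Phi> p1 q1 + \<Phi> p2 q2"
      using sm \<open>p1 \<le> p2\<close> False unfolding SM_def by (metis add.commute linorder_not_le less_imp_le)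
    then have "0 \<le> ((\<Phi> p1 q1 + \<Phi> p2 q2) - (\<Phi> p1 q2 + \<Phi> p2 q1)) * (kA - kB)"
      using kk by simp
    then show ?thesis using \<open>p1 \<le> p2\<close> False
      by (simp add: min_def max_def algebra_simps)
  qed
next
  case pF: False
  show ?thesis
  proof (cases "q1 \<le> q2")
    case True
    then have kk: "kB \<le> kA" using k pF by auto
    have "\<Phi> p2 q1 + \<Phi> p1 q2 \<le> \<Phi> p2 q2 + \<Phi> p1 q1"
      using sm pF True unfolding SM_def by (meson linorder_not_le less_imp_le)
    then have "0 \<le> ((\<Phi> p1 q1 + \<Phi> p2 q2) - (\<Phi> p1 q2 + \<Phi> p2 q1)) * (kA - kB)"
      using kk by simp
    then show ?thesis using pF True
      by (simp add: min_def max_def algebra_simps)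
  next
    case False with pF show ?thesis by (simp add: min_def max_def algebra_simps)
  qed
qed

definition kern :: "real \<Rightarrow> real^'n::finite \<Rightarrow> real^'n \<Rightarrow> real" where
  "kern e x y = inverse (norm (x - y) powr e)"

definition GG :: "(real \<Rightarrow> real \<Rightarrow> real) \<Rightarrow> real \<Rightarrow> (real^'n::finite \<Rightarrow> real) \<Rightarrow> (real^'n) \<times> (real^'n) \<Rightarrow> real" where
  "GG \<Phi> e v z = \<Phi> (v (fst z)) (v (snd z)) * kern e (fst z) (snd z)"

definition SS :: "(real \<Rightarrow> real \<Rightarrow> real) \<Rightarrow> real \<Rightarrow> 'n::finite \<Rightarrow> real \<Rightarrow> (real^'n \<Rightarrow> real) \<Rightarrow> (real^'n) \<times> (real^'n) \<Rightarrow> real" where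
  "SS \<Phi> e i a v z = GG \<Phi> e v z + GG \<Phi> e v (reflect i a (fst z), snd z)
     + GG \<Phi> e v (fst z, reflect i a (snd z)) + GG \<Phi> e v (reflect i a (fst z), reflect i a (snd z))"

lemma pol1: "polarization i a v x = (if a \<le> x $ i then min (v x) (v (reflect i a x)) else max (v x) (v (reflect i a x)))"
  by (simp add: polarization_def)

lemma pol2: "polarization i a v (reflect i a x) = (if a \<le> x $ i then max (v x) (v (reflect i a x)) else min (v x) (v (reflect i a x)))"
proof -
  consider "a < x $ i" | "a = x $ i" | "x $ i < a" by linarith
  then show ?thesis
  proof cases
    case 1 then show ?thesis by (simp add: polarization_def max.commute)
  next
    case 2 then show ?thesis by (simp add: polarization_def reflect_fix)
  next
    case 3 then show ?thesis by (simp add: polarization_def min.commute)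
  qed
qed

lemma kern_both: "kern e (reflect i a x) (reflect i a y) = kern e x y"
  by (simp add: kern_def norm_reflect_both)

lemma kern_one: "kern e (reflect i a x) y = kern e x (reflect i a y)"
  by (simp add: kern_def norm_reflect_one)

lemma kern_mono: "0 \<le> e \<Longrightarrow> 0 < norm (x - y) \<Longrightarrow> norm (x - y) \<le> norm (x - y') \<Longrightarrow> kern e x y' \<le> kern e x y"
  unfolding kern_def by (rule le_imp_inverse_le) (auto intro: powr_mono2)

lemma kern_nonneg: "0 \<le> kern e x y"
  by (simp add: kern_def)

lemma SS_pointwise:
  assumes sm: "SM \<Phi>" and e: "0 \<le> e"
  shows "SS \<Phi> e i a (polarization i a v) z \<le> SS \<Phi> e i a v z"
proof -
  obtain x y where z: "z = (x, y)" by (cases z)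
  define R where "R = reflect i a"
  define p1 where "p1 = v x"
  define p2 where "p2 = v (R x)"
  define q1 where "q1 = v y"
  define q2 where "q2 = v (R y)"
  define kA where "kA = kern e x y"
  define kB where "kB = kern e x (R y)"
  let ?W = "polarization i a v"
  have Sv: "SS \<Phi> e i a v z = \<Phi> p1 q1 * kA + \<Phi> p2 q1 * kB + \<Phi> p1 q2 * kB + \<Phi> p2 q2 * kA"
    by (simp add: SS_def GG_def z p1_def p2_def q1_def q2_def kA_def kB_def R_def kern_both kern_one)
  have SW: "SS \<Phi> e i a ?W z = \<Phi> (?W x) (?W y) * kA + \<Phi> (?W (R x)) (?W y) * kB + \<Phi> (?W x) (?W (R y)) * kB + \<Phi> (?W (R x)) (?W (R y)) * kA"
    by (simp add: SS_def GG_def z kA_def kB_def R_def kern_both kern_one)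
  have Wx: "?W x = (if a \<le> x $ i then min p1 p2 else max p1 p2)"
    and WRx: "?W (R x) = (if a \<le> x $ i then max p1 p2 else min p1 p2)"
    and Wy: "?W y = (if a \<le> y $ i then min q1 q2 else max q1 q2)"
    and WRy: "?W (R y) = (if a \<le> y $ i then max q1 q2 else min q1 q2)"
    unfolding R_def p1_def p2_def q1_def q2_def
    by (rule pol1, rule pol2, rule pol1, rule pol2)
  have same: "kB \<le> kA \<or> (p1 = q1 \<and> p2 = q2)" if "0 \<le> (x $ i - a) * (y $ i - a)"
  proof (cases "x = y")
    case True then show ?thesis by (simp add: p1_def p2_def q1_def q2_def)
  next
    case False
    then have "0 < norm (x - y)" by simp
    then show ?thesis unfolding kA_def kB_def R_def
      using kern_mono[OF e _ dist_same[OF that]] by blast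
  qed
  have opp: "kA \<le> kB \<or> (p1 = q2 \<and> p2 = q1)" if "(x $ i - a) * (y $ i - a) \<le> 0"
  proof (cases "x = R y")
    case True
    then have "R x = y" by (simp add: R_def)
    with True show ?thesis by (simp add: p1_def p2_def q1_def q2_def)
  next
    case False
    then have "0 < norm (x - R y)" by simp
    then show ?thesis unfolding kA_def kB_def R_def
      using kern_mono[OF e _ dist_opp[OF that]] R_def by blast
  qed
  consider "a \<le> x $ i" "a \<le> y $ i" | "\<not> a \<le> x $ i" "\<not> a \<le> y $ i"
    | "a \<le> x $ i" "\<not> a \<le> y $ i" | "\<not> a \<le> x $ i" "a \<le> y $ i" by blast
  then show ?thesis
  proof cases
    case 1
    then have "0 \<le> (x $ i - a) * (y $ i - a)" by simp
    from four[OF sm same[OF this]] show ?thesis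
      unfolding Sv SW Wx WRx Wy WRy using 1 by (simp add: algebra_simps)
  next
    case 2
    then have "0 \<le> (x $ i - a) * (y $ i - a)" by (simp add: zero_le_mult_iff)
    from four[OF sm same[OF this]] show ?thesis
      unfolding Sv SW Wx WRx Wy WRy using 2 by (simp add: algebra_simps)
  next
    case 3
    then have "(x $ i - a) * (y $ i - a) \<le> 0" by (simp add: mult_nonneg_nonpos)
    from four[OF sm opp[OF this]] show ?thesis
      unfolding Sv SW Wx WRx Wy WRy using 3 by (simp add: algebra_simps min.commute max.commute)
  next
    case 4
    then have "(x $ i - a) * (y $ i - a) \<le> 0" by (simp add: mult_nonpos_nonneg)
    from four[OF sm opp[OF this]] show ?thesis
      unfolding Sv SW Wx WRx Wy WRy using 4 by (simp add: algebra_simps min.commute max.commute)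
  qed
qed

lemma idm[measurable]: "(\<lambda>x. x) \<in> (lebesgue :: 'a::euclidean_space measure) \<rightarrow>\<^sub>M borel"
  by (rule measurable_completion) simp

lemma fst_bor[measurable]: "fst \<in> (lebesgue \<Otimes>\<^sub>M lebesgue) \<rightarrow>\<^sub>M (borel::('a::euclidean_space) measure)"
  by (rule measurable_compose[OF measurable_fst idm])

lemma snd_bor[measurable]: "snd \<in> ((lebesgue::('b::euclidean_space) measure) \<Otimes>\<^sub>M lebesgue) \<rightarrow>\<^sub>M (borel::('a::euclidean_space) measure)"
  by (rule measurable_compose[OF measurable_snd idm])

lemma kern_meas: "(\<lambda>z. kern e (fst z) (snd z)) \<in> borel_measurable ((lebesgue::(real^'n::finite) measure) \<Otimes>\<^sub>M lebesgue)"
  unfolding kern_def by measurable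

lemma GG_meas:
  fixes v :: "real^'n::finite \<Rightarrow> real"
  assumes v: "v \<in> borel_measurable lebesgue" and \<Phi>: "(\<lambda>(p,q). \<Phi> p q) \<in> borel_measurable borel"
  shows "GG \<Phi> e v \<in> borel_measurable (lebesgue \<Otimes>\<^sub>M lebesgue)"
proof -
  have a: "(\<lambda>z. (v (fst z), v (snd z))) \<in> (lebesgue \<Otimes>\<^sub>M lebesgue) \<rightarrow>\<^sub>M (borel \<Otimes>\<^sub>M borel)"
    by (intro measurable_Pair measurable_compose[OF measurable_fst v] measurable_compose[OF measurable_snd v])
  have b: "(\<lambda>z. (\<lambda>(p,q). \<Phi> p q) (v (fst z), v (snd z))) \<in> borel_measurable (lebesgue \<Otimes>\<^sub>M lebesgue)"
    by (rule measurable_compose[OF a]) (simp add: borel_prod \<Phi>)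
  have "GG \<Phi> e v = (\<lambda>z. (\<lambda>(p,q). \<Phi> p q) (v (fst z), v (snd z)) * kern e (fst z) (snd z))"
    by (simp add: GG_def fun_eq_iff)
  moreover have b': "(\<lambda>z. \<Phi> (v (fst z)) (v (snd z))) \<in> borel_measurable (lebesgue \<Otimes>\<^sub>M lebesgue)"
    using b by simp
  ultimately show ?thesis using borel_measurable_times[OF b' kern_meas] by simp
qed

lemma pol_meas:
  assumes v: "v \<in> borel_measurable lebesgue"
  shows "polarization i a v \<in> borel_measurable lebesgue"
proof -
  have vr[measurable]: "(\<lambda>x. v (reflect i a x)) \<in> borel_measurable lebesgue"
    by (rule measurable_compose[OF reflect_meas v])
  have [measurable]: "v \<in> borel_measurable lebesgue" by (rule v)
  have [measurable]: "(\<lambda>x::real^'a. x $ i) \<in> borel_measurable lebesgue"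
    by (rule measurable_compose[OF idm]) simp
  show ?thesis unfolding polarization_def by measurable
qed

lemma pres:
  fixes g :: "(real^'n::finite) \<times> (real^'n) \<Rightarrow> (real^'n) \<times> (real^'n)"
  assumes "g = (\<lambda>z. (reflect i a (fst z), snd z)) \<or> g = (\<lambda>z. (fst z, reflect i a (snd z))) \<or> g = (\<lambda>z. (reflect i a (fst z), reflect i a (snd z)))"
  shows "g \<in> (lebesgue \<Otimes>\<^sub>M lebesgue) \<rightarrow>\<^sub>M (lebesgue \<Otimes>\<^sub>M lebesgue)" and "distr (lebesgue \<Otimes>\<^sub>M lebesgue) (lebesgue \<Otimes>\<^sub>M lebesgue) g = (lebesgue \<Otimes>\<^sub>M lebesgue)"
proof -
  have R: "reflect i a \<in> lebesgue \<rightarrow>\<^sub>M lebesgue" by (rule reflect_meas)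
  have I: "(\<lambda>x. x) \<in> (lebesgue::(real^'n) measure) \<rightarrow>\<^sub>M lebesgue" by simp
  have sf: "sigma_finite_measure (lebesgue::(real^'n) measure)" by (rule sigma_finite_lebesgue)
  have D1: "distr lebesgue lebesgue (reflect i a) \<Otimes>\<^sub>M distr lebesgue lebesgue (\<lambda>x::real^'n. x) = distr (lebesgue \<Otimes>\<^sub>M lebesgue) (lebesgue \<Otimes>\<^sub>M lebesgue) (\<lambda>(x, y). (reflect i a x, y))"
    using pair_measure_distr[OF R I] sf reflect_distr by simp
  have D2: "distr lebesgue lebesgue (\<lambda>x::real^'n. x) \<Otimes>\<^sub>M distr lebesgue lebesgue (reflect i a) = distr (lebesgue \<Otimes>\<^sub>M lebesgue) (lebesgue \<Otimes>\<^sub>M lebesgue) (\<lambda>(x, y). (x, reflect i a y))"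
    by (rule pair_measure_distr[OF I R]) (simp only: reflect_distr sf)
  have D3: "distr lebesgue lebesgue (reflect i a) \<Otimes>\<^sub>M distr lebesgue lebesgue (reflect i a) = distr (lebesgue \<Otimes>\<^sub>M lebesgue) (lebesgue \<Otimes>\<^sub>M lebesgue) (\<lambda>(x, y). (reflect i a x, reflect i a y))"
    by (rule pair_measure_distr[OF R R]) (simp only: reflect_distr sf)
  have m1: "(\<lambda>z. (reflect i a (fst z), snd z)) \<in> (lebesgue \<Otimes>\<^sub>M lebesgue) \<rightarrow>\<^sub>M ((lebesgue::(real^'n) measure) \<Otimes>\<^sub>M lebesgue)"
    by (intro measurable_Pair measurable_compose[OF measurable_fst R] measurable_snd)
  have m2: "(\<lambda>z. (fst z, reflect i a (snd z))) \<in> (lebesgue \<Otimes>\<^sub>M lebesgue) \<rightarrow>\<^sub>M ((lebesgue::(real^'n) measure) \<Otimes>\<^sub>M lebesgue)"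
    by (intro measurable_Pair measurable_compose[OF measurable_snd R] measurable_fst)
  have m3: "(\<lambda>z. (reflect i a (fst z), reflect i a (snd z))) \<in> (lebesgue \<Otimes>\<^sub>M lebesgue) \<rightarrow>\<^sub>M ((lebesgue::(real^'n) measure) \<Otimes>\<^sub>M lebesgue)"
    by (intro measurable_Pair measurable_compose[OF measurable_snd R] measurable_compose[OF measurable_fst R])
  show "g \<in> (lebesgue \<Otimes>\<^sub>M lebesgue) \<rightarrow>\<^sub>M (lebesgue \<Otimes>\<^sub>M lebesgue)"
    using assms m1 m2 m3 by auto
  show "distr (lebesgue \<Otimes>\<^sub>M lebesgue) (lebesgue \<Otimes>\<^sub>M lebesgue) g = (lebesgue \<Otimes>\<^sub>M lebesgue)"
    using assms D1 D2 D3 by (auto simp: reflect_distr case_prod_beta' split_beta)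
qed

lemma mp:
  fixes g :: "(real^'n::finite) \<times> (real^'n) \<Rightarrow> (real^'n) \<times> (real^'n)"
    and h :: "(real^'n) \<times> (real^'n) \<Rightarrow> real"
  assumes "g = (\<lambda>z. (reflect i a (fst z), snd z)) \<or> g = (\<lambda>z. (fst z, reflect i a (snd z))) \<or> g = (\<lambda>z. (reflect i a (fst z), reflect i a (snd z)))"
    and h: "h \<in> borel_measurable (lebesgue \<Otimes>\<^sub>M lebesgue)"
  shows "integrable (lebesgue \<Otimes>\<^sub>M lebesgue) (\<lambda>z. h (g z)) \<longleftrightarrow> integrable (lebesgue \<Otimes>\<^sub>M lebesgue) h"
    and "integral\<^sup>L (lebesgue \<Otimes>\<^sub>M lebesgue) (\<lambda>z. h (g z)) = integral\<^sup>L (lebesgue \<Otimes>\<^sub>M lebesgue) h"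
  using integrable_distr_eq[OF pres(1)[OF assms(1)] h] integral_distr[OF pres(1)[OF assms(1)] h]
  unfolding pres(2)[OF assms(1)] by auto

lemma SS_int:
  fixes f :: "real^'n::finite \<Rightarrow> real"
  assumes f: "f \<in> borel_measurable lebesgue" and \<Psi>: "(\<lambda>(p,q). \<Psi> p q) \<in> borel_measurable borel"
    and I: "integrable (lebesgue \<Otimes>\<^sub>M lebesgue) (GG \<Psi> e f)"
  shows "integrable (lebesgue \<Otimes>\<^sub>M lebesgue) (SS \<Psi> e i a f)"
    and "integral\<^sup>L (lebesgue \<Otimes>\<^sub>M lebesgue) (SS \<Psi> e i a f) = 4 * integral\<^sup>L (lebesgue \<Otimes>\<^sub>M lebesgue) (GG \<Psi> e f)"
proof -
  note h = GG_meas[OF f \<Psi>, of e]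
  note A = mp[where h="GG \<Psi> e f" and i=i and a=a, OF _ h]
  have i1: "integrable (lebesgue \<Otimes>\<^sub>M lebesgue) (\<lambda>z. GG \<Psi> e f (reflect i a (fst z), snd z))"
    using A(1)[of "\<lambda>z. (reflect i a (fst z), snd z)"] I by simp
  have i2: "integrable (lebesgue \<Otimes>\<^sub>M lebesgue) (\<lambda>z. GG \<Psi> e f (fst z, reflect i a (snd z)))"
    using A(1)[of "\<lambda>z. (fst z, reflect i a (snd z))"] I by simp
  have i3: "integrable (lebesgue \<Otimes>\<^sub>M lebesgue) (\<lambda>z. GG \<Psi> e f (reflect i a (fst z), reflect i a (snd z)))"
    using A(1)[of "\<lambda>z. (reflect i a (fst z), reflect i a (snd z))"] I by simp
  have e1: "integral\<^sup>L (lebesgue \<Otimes>\<^sub>M lebesgue) (\<lambda>z. GG \<Psi> e f (reflect i a (fst z), snd z)) = integral\<^sup>L (lebesgue \<Otimes>\<^sub>M lebesgue) (GG \<Psi> e f)"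
    using A(2)[of "\<lambda>z. (reflect i a (fst z), snd z)"] by simp
  have e2: "integral\<^sup>L (lebesgue \<Otimes>\<^sub>M lebesgue) (\<lambda>z. GG \<Psi> e f (fst z, reflect i a (snd z))) = integral\<^sup>L (lebesgue \<Otimes>\<^sub>M lebesgue) (GG \<Psi> e f)"
    using A(2)[of "\<lambda>z. (fst z, reflect i a (snd z))"] by simp
  have e3: "integral\<^sup>L (lebesgue \<Otimes>\<^sub>M lebesgue) (\<lambda>z. GG \<Psi> e f (reflect i a (fst z), reflect i a (snd z))) = integral\<^sup>L (lebesgue \<Otimes>\<^sub>M lebesgue) (GG \<Psi> e f)"
    using A(2)[of "\<lambda>z. (reflect i a (fst z), reflect i a (snd z))"] by simp
  have SSe: "SS \<Psi> e i a f = (\<lambda>z. GG \<Psi> e f z + GG \<Psi> e f (reflect i a (fst z), snd z)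
     + GG \<Psi> e f (fst z, reflect i a (snd z)) + GG \<Psi> e f (reflect i a (fst z), reflect i a (snd z)))"
    by (simp add: SS_def fun_eq_iff)
  show "integrable (lebesgue \<Otimes>\<^sub>M lebesgue) (SS \<Psi> e i a f)"
    unfolding SSe using I i1 i2 i3 by (intro Bochner_Integration.integrable_add) auto
  show "integral\<^sup>L (lebesgue \<Otimes>\<^sub>M lebesgue) (SS \<Psi> e i a f) = 4 * integral\<^sup>L (lebesgue \<Otimes>\<^sub>M lebesgue) (GG \<Psi> e f)"
    unfolding SSe using I i1 i2 i3 e1 e2 e3
    by (simp add: Bochner_Integration.integral_add Bochner_Integration.integrable_add)
qed

lemma SM_sq: "SM (\<lambda>p q. (p - q)\<^sup>2)"
  unfolding SM_def
proof (intro allI impI)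
  fix p1 p2 q1 q2 :: real assume "p1 \<le> p2" "q1 \<le> q2"
  then have "0 \<le> (p2 - p1) * (q2 - q1)" by simp
  then show "(p1 - q1)\<^sup>2 + (p2 - q2)\<^sup>2 \<le> (p1 - q2)\<^sup>2 + (p2 - q1)\<^sup>2"
    by (simp add: power2_eq_square algebra_simps)
qed

lemma sq_meas: "(\<lambda>(p,q). (\<lambda>p q. (p - q)\<^sup>2) p q) \<in> borel_measurable (borel :: (real \<times> real) measure)"
  unfolding case_prod_beta by (intro borel_measurable_continuous_onI continuous_intros)

lemma main:
  fixes v :: "real^'n::finite \<Rightarrow> real"
  assumes v: "v \<in> borel_measurable lebesgue"
    and Q: "integrable (lebesgue \<Otimes>\<^sub>M lebesgue) (GG (\<lambda>p q. (p - q)\<^sup>2) e v)"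
    and \<Phi>m: "(\<lambda>(p,q). \<Phi> p q) \<in> borel_measurable borel"
    and sm: "SM \<Phi>" and bd: "\<And>p q. \<bar>\<Phi> p q\<bar> \<le> (p - q)\<^sup>2" and e: "0 \<le> e"
  shows "integrable (lebesgue \<Otimes>\<^sub>M lebesgue) (GG \<Phi> e v)"
    and "integrable (lebesgue \<Otimes>\<^sub>M lebesgue) (GG \<Phi> e (polarization i a v))"
    and "integral\<^sup>L (lebesgue \<Otimes>\<^sub>M lebesgue) (GG \<Phi> e (polarization i a v)) \<le> integral\<^sup>L (lebesgue \<Otimes>\<^sub>M lebesgue) (GG \<Phi> e v)"
proof -
  let ?sq = "\<lambda>p q. (p - q)\<^sup>2 :: real"
  let ?M = "lebesgue \<Otimes>\<^sub>M lebesgue :: ((real^'n) \<times> (real^'n)) measure"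
  let ?W = "polarization i a v"
  have W: "?W \<in> borel_measurable lebesgue" by (rule pol_meas[OF v])
  have bdG: "\<bar>GG \<Phi> e f z\<bar> \<le> GG ?sq e f z" for f z
    unfolding GG_def using bd[of "f (fst z)" "f (snd z)"] kern_nonneg[of e "fst z" "snd z"]
    by (simp add: abs_mult mult_right_mono)
  have Gsq_nn: "0 \<le> GG ?sq e f z" for f z
    unfolding GG_def by (simp add: kern_nonneg)
  have SQv: "integrable ?M (SS ?sq e i a v)"
    by (rule SS_int(1)[OF v sq_meas Q])
  have QW: "integrable ?M (GG ?sq e ?W)"
  proof (rule Bochner_Integration.integrable_bound[OF SQv])
    show "GG ?sq e ?W \<in> borel_measurable ?M" by (rule GG_meas[OF W sq_meas])
    show "AE z in ?M. norm (GG ?sq e ?W z) \<le> norm (SS ?sq e i a v z)"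
    proof (rule AE_I2)
      fix z
      have "GG ?sq e ?W z \<le> SS ?sq e i a ?W z"
        unfolding SS_def using Gsq_nn[of ?W] by (simp add: add_increasing2)
      also have "\<dots> \<le> SS ?sq e i a v z" by (rule SS_pointwise[OF SM_sq e])
      finally show "norm (GG ?sq e ?W z) \<le> norm (SS ?sq e i a v z)"
        using Gsq_nn[of ?W z] by simp
    qed
  qed
  have Gint: "integrable ?M (GG \<Phi> e f)" if f: "f \<in> borel_measurable lebesgue" and Qf: "integrable ?M (GG ?sq e f)" for f
  proof (rule Bochner_Integration.integrable_bound[OF Qf])
    show "GG \<Phi> e f \<in> borel_measurable ?M" by (rule GG_meas[OF f \<Phi>m])
    show "AE z in ?M. norm (GG \<Phi> e f z) \<le> norm (GG ?sq e f z)"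
    proof (rule AE_I2)
      fix z show "norm (GG \<Phi> e f z) \<le> norm (GG ?sq e f z)"
        using bdG[of f z] Gsq_nn[of f z] by simp
    qed
  qed
  show iv: "integrable ?M (GG \<Phi> e v)" by (rule Gint[OF v Q])
  show iW: "integrable ?M (GG \<Phi> e ?W)" by (rule Gint[OF W QW])
  have "4 * integral\<^sup>L ?M (GG \<Phi> e ?W) = integral\<^sup>L ?M (SS \<Phi> e i a ?W)"
    by (rule SS_int(2)[OF W \<Phi>m iW, symmetric])
  also have "\<dots> \<le> integral\<^sup>L ?M (SS \<Phi> e i a v)"
    by (rule integral_mono[OF SS_int(1)[OF W \<Phi>m iW] SS_int(1)[OF v \<Phi>m iv] SS_pointwise[OF sm e]])
  also have "\<dots> = 4 * integral\<^sup>L ?M (GG \<Phi> e v)"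
    by (rule SS_int(2)[OF v \<Phi>m iv])
  finally show "integral\<^sup>L ?M (GG \<Phi> e ?W) \<le> integral\<^sup>L ?M (GG \<Phi> e v)" by simp
qed

lemma lip_max: "\<bar>max (p::real) 0 - max q 0\<bar> \<le> \<bar>p - q\<bar>"
  by (simp add: max_def abs_if)

lemma bd_gen:
  fixes p q d :: real
  assumes "\<bar>d\<bar> \<le> \<bar>p - q\<bar>" shows "\<bar>(p - q) * d\<bar> \<le> (p - q)\<^sup>2"
proof -
  have "\<bar>(p - q) * d\<bar> = \<bar>p - q\<bar> * \<bar>d\<bar>" by (simp add: abs_mult)
  also have "\<dots> \<le> \<bar>p - q\<bar> * \<bar>p - q\<bar>" by (rule mult_left_mono[OF assms abs_ge_zero])
  also have "\<dots> = (p - q)\<^sup>2" by (simp add: power2_eq_square abs_mult[symmetric])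
  finally show ?thesis .
qed

definition Phi1 :: "real \<Rightarrow> real \<Rightarrow> real" where
  "Phi1 p q = (p - q) * (max p 0 - max q 0)"

definition Phi2 :: "real \<Rightarrow> real \<Rightarrow> real" where
  "Phi2 p q = - ((p - q) * (max (- p) 0 - max (- q) 0))"

lemma Phi1_bd: "\<bar>Phi1 p q\<bar> \<le> (p - q)\<^sup>2"
  unfolding Phi1_def by (rule bd_gen[OF lip_max])

lemma Phi2_bd: "\<bar>Phi2 p q\<bar> \<le> (p - q)\<^sup>2"
proof -
  have "\<bar>max (- p) 0 - max (- q) 0\<bar> \<le> \<bar>p - q\<bar>" using lip_max[of "-p" "-q"] by simp
  then show ?thesis unfolding Phi2_def using bd_gen by simp
qed

lemma Phi1_SM: "SM Phi1"
  unfolding SM_def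
proof (intro allI impI)
  fix p1 p2 q1 q2 :: real assume h: "p1 \<le> p2" "q1 \<le> q2"
  have "max q1 0 \<le> max q2 0" "max p1 0 \<le> max p2 0" using h by auto
  then have "0 \<le> (p2 - p1) * (max q2 0 - max q1 0)" "0 \<le> (q2 - q1) * (max p2 0 - max p1 0)"
    using h by simp_all
  moreover have "(Phi1 p1 q2 + Phi1 p2 q1) - (Phi1 p1 q1 + Phi1 p2 q2) =
      (p2 - p1) * (max q2 0 - max q1 0) + (q2 - q1) * (max p2 0 - max p1 0)"
    unfolding Phi1_def by (simp add: algebra_simps)
  ultimately show "Phi1 p1 q1 + Phi1 p2 q2 \<le> Phi1 p1 q2 + Phi1 p2 q1" by linarith
qed

lemma Phi2_SM: "SM Phi2"
  unfolding SM_def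
proof (intro allI impI)
  fix p1 p2 q1 q2 :: real assume h: "p1 \<le> p2" "q1 \<le> q2"
  have "max (-q2) 0 \<le> max (-q1) 0" "max (-p2) 0 \<le> max (-p1) 0" using h by auto
  then have "0 \<le> (p2 - p1) * (max (-q1) 0 - max (-q2) 0)" "0 \<le> (q2 - q1) * (max (-p1) 0 - max (-p2) 0)"
    using h by simp_all
  moreover have "(Phi2 p1 q2 + Phi2 p2 q1) - (Phi2 p1 q1 + Phi2 p2 q2) =
      (p2 - p1) * (max (-q1) 0 - max (-q2) 0) + (q2 - q1) * (max (-p1) 0 - max (-p2) 0)"
    unfolding Phi2_def by (simp add: algebra_simps)
  ultimately show "Phi2 p1 q1 + Phi2 p2 q2 \<le> Phi2 p1 q2 + Phi2 p2 q1" by linarith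
qed

lemma Phi1_meas: "(\<lambda>(p,q). Phi1 p q) \<in> borel_measurable (borel :: (real \<times> real) measure)"
  unfolding case_prod_beta Phi1_def by (intro borel_measurable_continuous_onI continuous_intros)

lemma Phi2_meas: "(\<lambda>(p,q). Phi2 p q) \<in> borel_measurable (borel :: (real \<times> real) measure)"
  unfolding case_prod_beta Phi2_def by (intro borel_measurable_continuous_onI continuous_intros)

lemma c_nonneg: "0 < s \<Longrightarrow> s < 1 \<Longrightarrow> 0 \<le> c_Ns N s"
  unfolding c_Ns_def
  by (intro divide_nonneg_pos mult_nonneg_nonneg mult_pos_pos Gamma_real_pos less_imp_le) auto

lemma Hs_pos: "Hs_inner s v (pos_part v) = c_Ns CARD('n) s / 2 * integral\<^sup>L (lebesgue \<Otimes>\<^sub>M lebesgue) (GG Phi1 (real CARD('n) + 2 * s) (v :: real^'n::finite \<Rightarrow> real))"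
  unfolding Hs_inner_def
  by (rule arg_cong[where f="\<lambda>t. _ * t"], rule Bochner_Integration.integral_cong)
     (auto simp: GG_def kern_def pos_part_def Phi1_def divide_inverse split: prod.split)

lemma Hs_neg: "- Hs_inner s v (neg_part v) = c_Ns CARD('n) s / 2 * integral\<^sup>L (lebesgue \<Otimes>\<^sub>M lebesgue) (GG Phi2 (real CARD('n) + 2 * s) (v :: real^'n::finite \<Rightarrow> real))"
proof -
  have "integral\<^sup>L (lebesgue \<Otimes>\<^sub>M lebesgue) (GG Phi2 (real CARD('n) + 2 * s) v)
     = integral\<^sup>L (lebesgue \<Otimes>\<^sub>M lebesgue) (\<lambda>p. - (case p of (x,y) \<Rightarrow>
        (v x - v y) * (neg_part v x - neg_part v y) / norm (x - y) powr (real CARD('n) + 2 * s)))"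
    by (rule Bochner_Integration.integral_cong)
       (auto simp: GG_def kern_def neg_part_def Phi2_def divide_inverse split: prod.split)
  then show ?thesis unfolding Hs_inner_def by simp
qed

theorem lemma2:
  fixes u :: "real^'n::finite \<Rightarrow> real" and s a :: real and i :: 'n
  assumes "CARD('n) \<ge> 2"
    and "0 < s" and "s < 1"
    and "in_Hs s u"
  shows "Hs_inner s u (pos_part u)
           \<ge> Hs_inner s (polarization i a u) (pos_part (polarization i a u))
         \<and> - Hs_inner s u (neg_part u)
           \<ge> - Hs_inner s (polarization i a u) (neg_part (polarization i a u))"
proof -
  define e where "e = real CARD('n) + 2 * s"
  have e: "0 \<le> e" using assms(2) by (simp add: e_def)
  have v: "u \<in> borel_measurable lebesgue" using assms(4) by (simp add: in_Hs_def)
  have Q: "integrable (lebesgue \<Otimes>\<^sub>M lebesgue) (GG (\<lambda>p q. (p - q)\<^sup>2) e u)"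
  proof -
    have "GG (\<lambda>p q. (p - q)\<^sup>2) e u = (\<lambda>(x,y). (u x - u y)\<^sup>2 / norm (x - y) powr (real CARD('n) + 2 * s))"
      by (auto simp: GG_def kern_def e_def divide_inverse fun_eq_iff)
    then show ?thesis using assms(4) by (simp add: in_Hs_def)
  qed
  have c: "0 \<le> c_Ns CARD('n) s / 2" using c_nonneg[OF assms(2,3)] by simp
  note m1 = main(3)[OF v Q Phi1_meas Phi1_SM Phi1_bd e, of i a]
  note m2 = main(3)[OF v Q Phi2_meas Phi2_SM Phi2_bd e, of i a]
  show ?thesis
    unfolding Hs_pos Hs_neg e_def[symmetric]
    using mult_left_mono[OF m1 c] mult_left_mono[OF m2 c] by simp
qed

end
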